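(* For every $n$ there exist two sets $A$ and $B$, each consisting of $n$ pairwise disjoint axis-aligned rectangles in the plane, such that every sequence of sets $A=X_0,X_1,\dots,X_m=B$ in which each $X_j$ is an independent set of $A\cup B$ and consecutive sets differ by exactly one rectangle contains an empty set $X_j=\emptyset$; in particular no MIX function for rectangles has $\Gamma(n)<n$. Consequently, for any $\beta>0$, there is no fully dynamic data structure maintaining a $\beta$-approximate maximum independent set of axis-aligned rectangles that reports at most $o(n)$ changes in the independent set per update.
   Context: An independent set of a set of rectangles is a subset of pairwise disjoint rectangles; $\mathrm{OPT}(S)$ is the maximum size of an independent set of $S$. A MIX function assigns to independent sets $A,B$ a sequence $\mathrm{MIX}(A,B,i)$, $i\in[0,|A|+|B|]$, of independent sets with $\mathrm{MIX}(A,B,0)=A$, $\mathrm{MIX}(A,B,|A|+|B|)=B$, consecutive sets differing by one item, and $|\mathrm{MIX}(A,B,i)|\ge\min(|A|,|B|)-\Gamma(|A|+|B|)$. A fully dynamic data structure maintains a set $S$ of rectangles, initially empty, under updates $u$ replacing $S$ by $S\oplus\{u\}$ (insert if absent, delete if present), and after each update reports the symmetric difference between the previous and new maintained set $I\subseteq S$; it is $\beta$-approximate if $I$ is always an independent set with $|I|\ge\beta\,\mathrm{OPT}(S)$. Here $n$ is the number of stored rectangles. *)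

theory Defs
  imports Complex_Main "HOL-Library.Landau_Symbols"
begin

type_synonym rect = "(real \<times> real) set"

definition is_rect :: "rect \<Rightarrow> bool" where
  "is_rect R \<longleftrightarrow> (\<exists>a b c d. a < b \<and> c < d \<and> R = {a..b} \<times> {c..d})"

definition pairwise_disj :: "rect set \<Rightarrow> bool" where
  "pairwise_disj X \<longleftrightarrow> (\<forall>R\<in>X. \<forall>R'\<in>X. R \<noteq> R' \<longrightarrow> R \<inter> R' = {})"

definition independent :: "rect set \<Rightarrow> rect set \<Rightarrow> bool" where
  "independent S I \<longleftrightarrow> I \<subseteq> S \<and> pairwise_disj I"

definition OPT :: "rect set \<Rightarrow> nat" where
  "OPT S = Max {card I | I. independent S I}"

definition symdiff :: "'a set \<Rightarrow> 'a set \<Rightarrow> 'a set" where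
  "symdiff X Y = (X - Y) \<union> (Y - X)"

definition stored :: "rect list \<Rightarrow> rect set" where
  "stored us = fold (\<lambda>u S. symdiff S {u}) us {}"

text \<open>A (deterministic) fully dynamic data structure is modelled by the map D sending an
  update history to the maintained set I.\<close>
definition beta_approx_ds :: "real \<Rightarrow> (rect list \<Rightarrow> rect set) \<Rightarrow> bool" where
  "beta_approx_ds \<beta> D \<longleftrightarrow>
     (\<forall>us. (\<forall>u\<in>set us. is_rect u) \<longrightarrow>
        independent (stored us) (D us) \<and> real (card (D us)) \<ge> \<beta> * real (OPT (stored us)))"

definition changes_bounded :: "(nat \<Rightarrow> real) \<Rightarrow> (rect list \<Rightarrow> rect set) \<Rightarrow> bool" where
  "changes_bounded f D \<longleftrightarrow>
     (\<forall>us u. (\<forall>v\<in>set (us @ [u]). is_rect v) \<longrightarrow>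
        real (card (symdiff (D us) (D (us @ [u])))) \<le> f (card (stored (us @ [u]))))"

end

theory Submission
  imports Defs
begin

definition Hs :: "nat \<Rightarrow> nat \<Rightarrow> rect" where
  "Hs m i = {0..2*real m+2} \<times> {2*real i..2*real i+1}"
definition Vs :: "nat \<Rightarrow> nat \<Rightarrow> rect" where
  "Vs n k = {2*real k..2*real k+1} \<times> {0..2*real n+2}"

lemma Hs_rect: "is_rect (Hs m i)"
  unfolding is_rect_def Hs_def
  by (rule exI[of _ 0], rule exI[of _ "2*real m+2"], rule exI[of _ "2*real i"],
      rule exI[of _ "2*real i+1"]) simp

lemma Vs_rect: "is_rect (Vs n k)"
  unfolding is_rect_def Vs_def
  by (rule exI[of _ "2*real k"], rule exI[of _ "2*real k+1"], rule exI[of _ 0],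
      rule exI[of _ "2*real n+2"]) simp

lemma cross: "i \<le> n \<Longrightarrow> k \<le> m \<Longrightarrow> Hs m i \<inter> Vs n k \<noteq> {}"
proof -
  assume a: "i \<le> n" "k \<le> m"
  have "(2*real k, 2*real i) \<in> Hs m i \<inter> Vs n k"
    using a by (auto simp: Hs_def Vs_def)
  then show ?thesis by blast
qed

lemma Hs_inj: "inj (Hs m)"
proof (rule injI)
  fix i j assume e: "Hs m i = Hs m j"
  have "(0, 2*real i) \<in> Hs m i" "(0, 2*real j) \<in> Hs m j" by (auto simp: Hs_def)
  then have "(0, 2*real i) \<in> Hs m j" "(0, 2*real j) \<in> Hs m i" using e by auto
  then have "real j \<le> real i" "real i \<le> real j" by (auto simp: Hs_def)
  then show "i = j" by simp
qed

lemma Vs_inj: "inj (Vs n)"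
proof (rule injI)
  fix i j assume e: "Vs n i = Vs n j"
  have "(2*real i, 0) \<in> Vs n i" "(2*real j, 0) \<in> Vs n j" by (auto simp: Vs_def)
  then have "(2*real i, 0) \<in> Vs n j" "(2*real j, 0) \<in> Vs n i" using e by auto
  then have "real j \<le> real i" "real i \<le> real j" by (auto simp: Vs_def)
  then show "i = j" by simp
qed

lemma Hs_Vs: "1 \<le> k \<Longrightarrow> Hs m i \<noteq> Vs n k"
proof
  assume k: "1 \<le> k" and e: "Hs m i = Vs n k"
  have "(0, 2*real i) \<in> Hs m i" by (auto simp: Hs_def)
  then have "(0::real, 2*real i) \<in> Vs n k" using e by simp
  then have "2 * real k \<le> 0" by (simp add: Vs_def)
  with k show False by simp
qed

lemma Hs_disj: "i \<noteq> j \<Longrightarrow> Hs m i \<inter> Hs m j = {}"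
proof -
  assume "i \<noteq> j"
  then have "i + 1 \<le> j \<or> j + 1 \<le> i" by arith
  then have "real i + 1 \<le> real j \<or> real j + 1 \<le> real i"
    by (metis of_nat_1 of_nat_add of_nat_le_iff)
  then show ?thesis by (auto simp: Hs_def)
qed

lemma Vs_disj: "i \<noteq> j \<Longrightarrow> Vs n i \<inter> Vs n j = {}"
proof -
  assume "i \<noteq> j"
  then have "i + 1 \<le> j \<or> j + 1 \<le> i" by arith
  then have "real i + 1 \<le> real j \<or> real j + 1 \<le> real i"
    by (metis of_nat_1 of_nat_add of_nat_le_iff)
  then show ?thesis by (auto simp: Vs_def)
qed

lemma grid_split:
  assumes "\<forall>a\<in>A. \<forall>b\<in>B. a \<inter> b \<noteq> {}" "A \<inter> B = {}" "I \<subseteq> A \<union> B" "pairwise_disj I"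
  shows "I \<subseteq> A \<or> I \<subseteq> B"
proof (rule ccontr)
  assume "\<not> (I \<subseteq> A \<or> I \<subseteq> B)"
  then obtain a b where ab: "a \<in> I" "a \<notin> B" "b \<in> I" "b \<notin> A" by blast
  then have "a \<in> A" "b \<in> B" using assms(3) by auto
  then have "a \<noteq> b" "a \<inter> b \<noteq> {}" using assms(1) ab by auto
  then show False using assms(4) ab unfolding pairwise_disj_def by blast
qed

lemma switch: "P a \<Longrightarrow> \<not> P b \<Longrightarrow> a \<le> b \<Longrightarrow> \<exists>t. a \<le> t \<and> t < b \<and> P t \<and> \<not> P (Suc t)"
proof (induction b)
  case 0 then show ?case by auto
next
  case (Suc b)
  show ?case
  proof (cases "P b")
    case True
    have "a \<noteq> Suc b" using Suc.prems True by auto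
    then have "a \<le> b" using Suc.prems by auto
    then show ?thesis using True Suc.prems by auto
  next
    case False
    then have "a \<noteq> Suc b" using Suc by auto
    then have "a \<le> b" using Suc by auto
    then show ?thesis using Suc.IH[OF Suc.prems(1) False] by auto
  qed
qed

lemma OPT_ge: "finite S \<Longrightarrow> independent S I \<Longrightarrow> card I \<le> OPT S"
proof -
  assume f: "finite S" and i: "independent S I"
  have "{card I | I. independent S I} \<subseteq> card ` Pow S"
    by (auto simp: independent_def)
  then have "finite {card I | I. independent S I}" using f by (meson finite_Pow_iff finite_imageI finite_subset)
  then show ?thesis unfolding OPT_def using i by (intro Max_ge) auto
qed

lemma fold_toggle:
  "distinct xs \<Longrightarrow> set xs \<inter> S = {} \<Longrightarrow> fold (\<lambda>u S. symdiff S {u}) xs S = S \<union> set xs"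
proof (induction xs arbitrary: S)
  case Nil then show ?case by simp
next
  case (Cons x xs)
  have "symdiff S {x} = insert x S" using Cons.prems by (auto simp: symdiff_def)
  then show ?case using Cons by auto
qed

lemma stored_distinct: "distinct xs \<Longrightarrow> stored xs = set xs"
  unfolding stored_def using fold_toggle[of xs "{}"] by simp

lemma path_empty:
  assumes cr: "\<forall>a\<in>A. \<forall>b\<in>B. a \<inter> b \<noteq> {}" and dj: "A \<inter> B = {}" and Bne: "B \<noteq> {}"
    and X: "X 0 = A" "X m = B" "\<forall>j\<le>m. independent (A \<union> B) (X j)"
      "\<forall>j<m. card (symdiff (X j) (X (Suc j))) = 1"
  shows "\<exists>j\<le>m. X j = {}"
proof -
  have "\<not> X m \<subseteq> A" using X(2) Bne dj by auto
  then obtain t where t: "t < m" "X t \<subseteq> A" "\<not> X (Suc t) \<subseteq> A"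
    using switch[of "\<lambda>j. X j \<subseteq> A" 0 m] X(1) by auto
  have "independent (A \<union> B) (X (Suc t))" using X(3) t(1) by auto
  then have "X (Suc t) \<subseteq> B" using grid_split[OF cr dj] t(3) unfolding independent_def by blast
  then have d: "X t \<inter> X (Suc t) = {}" using t(2) dj by blast
  then have "symdiff (X t) (X (Suc t)) = X t \<union> X (Suc t)" by (auto simp: symdiff_def)
  moreover have "card (symdiff (X t) (X (Suc t))) = 1" using X(4) t(1) by blast
  ultimately have "card (X t \<union> X (Suc t)) = Suc 0" by simp
  then obtain z where z: "X t \<union> X (Suc t) = {z}" by (auto simp: card_Suc_eq)
  have "X t = {} \<or> X (Suc t) = {}"
  proof (cases "z \<in> X t")
    case True then have "z \<notin> X (Suc t)" using d by (simp add: disjoint_iff)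
    then have "X (Suc t) = {}" using z by (metis Un_upper2 subset_singletonD singletonI)
    then show ?thesis by simp
  next
    case False then have "X t = {}" using z by (metis Un_upper1 subset_singletonD singletonI)
    then show ?thesis by simp
  qed
  moreover have "t \<le> m" "Suc t \<le> m" using t(1) by auto
  ultimately show ?thesis by (elim disjE) (rule exI, rule conjI, assumption, assumption)+
qed

lemma grid_facts:
  shows "\<forall>a\<in>Hs m ` {1..n}. \<forall>b\<in>Vs n ` {1..m}. a \<inter> b \<noteq> {}"
    and "Hs m ` {1..n} \<inter> Vs n ` {1..m} = {}"
    and "pairwise_disj (Hs m ` {1..n})"
    and "pairwise_disj (Vs n ` {1..m})"
    and "\<forall>R\<in>Hs m ` {1..n} \<union> Vs n ` {1..m}. is_rect R"
    and "card (Hs m ` {1..n}) = n"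
    and "card (Vs n ` {1..m}) = m"
proof -
  show "\<forall>a\<in>Hs m ` {1..n}. \<forall>b\<in>Vs n ` {1..m}. a \<inter> b \<noteq> {}"
  proof (intro ballI)
    fix a b assume "a \<in> Hs m ` {1..n}" "b \<in> Vs n ` {1..m}"
    then obtain i k where "a = Hs m i" "b = Vs n k" "i \<le> n" "k \<le> m" by auto
    then show "a \<inter> b \<noteq> {}" using cross by simp
  qed
  show "Hs m ` {1..n} \<inter> Vs n ` {1..m} = {}"
  proof (rule equals0I)
    fix x assume "x \<in> Hs m ` {1..n} \<inter> Vs n ` {1..m}"
    then obtain i k where "Hs m i = Vs n k" "1 \<le> k" by (auto simp del: One_nat_def)
    then show False using Hs_Vs by metis
  qed
  show "pairwise_disj (Hs m ` {1..n})" unfolding pairwise_disj_def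
  proof (intro ballI impI)
    fix a b assume "a \<in> Hs m ` {1..n}" "b \<in> Hs m ` {1..n}" "a \<noteq> b"
    then obtain i j where "a = Hs m i" "b = Hs m j" "i \<noteq> j" by auto
    then show "a \<inter> b = {}" using Hs_disj by simp
  qed
  show "pairwise_disj (Vs n ` {1..m})" unfolding pairwise_disj_def
  proof (intro ballI impI)
    fix a b assume "a \<in> Vs n ` {1..m}" "b \<in> Vs n ` {1..m}" "a \<noteq> b"
    then obtain i j where "a = Vs n i" "b = Vs n j" "i \<noteq> j" by auto
    then show "a \<inter> b = {}" using Vs_disj by simp
  qed
  show "\<forall>R\<in>Hs m ` {1..n} \<union> Vs n ` {1..m}. is_rect R"
    using Hs_rect Vs_rect by auto
  show "card (Hs m ` {1..n}) = n"
  proof -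
    have "inj_on (Hs m) {1..n}" using Hs_inj by (simp add: inj_on_def inj_def)
    then show ?thesis by (simp add: card_image)
  qed
  show "card (Vs n ` {1..m}) = m"
  proof -
    have "inj_on (Vs n) {1..m}" using Vs_inj by (simp add: inj_on_def inj_def)
    then show ?thesis by (simp add: card_image)
  qed
qed

lemma part1:
  "\<exists>A B :: rect set.
            finite A \<and> finite B \<and> card A = n \<and> card B = n \<and>
            (\<forall>R\<in>A \<union> B. is_rect R) \<and> pairwise_disj A \<and> pairwise_disj B \<and>
            (\<forall>(X :: nat \<Rightarrow> rect set) m.
               X 0 = A \<and> X m = B \<and> (\<forall>j\<le>m. independent (A \<union> B) (X j)) \<and>
               (\<forall>j<m. card (symdiff (X j) (X (Suc j))) = 1)
               \<longrightarrow> (\<exists>j\<le>m. X j = {}))"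
proof (rule exI[of _ "Hs n ` {1..n}"], rule exI[of _ "Vs n ` {1..n}"], intro conjI allI impI)
  let ?A = "Hs n ` {1..n}" and ?B = "Vs n ` {1..n}"
  show "finite ?A" "finite ?B" by auto
  show "card ?A = n" by (rule grid_facts(6))
  show "card ?B = n" by (rule grid_facts(7))
  show "\<forall>R\<in>?A \<union> ?B. is_rect R" by (rule grid_facts(5))
  show "pairwise_disj ?A" by (rule grid_facts(3))
  show "pairwise_disj ?B" by (rule grid_facts(4))
  fix X :: "nat \<Rightarrow> rect set" and m
  assume h: "X 0 = ?A \<and> X m = ?B \<and> (\<forall>j\<le>m. independent (?A \<union> ?B) (X j)) \<and>
               (\<forall>j<m. card (symdiff (X j) (X (Suc j))) = 1)"
  show "\<exists>j\<le>m. X j = {}"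
  proof (cases "n = 0")
    case True then show ?thesis using h by (intro exI[of _ 0]) auto
  next
    case False
    then have "1 \<le> n" by simp
    then have "Vs n n \<in> ?B" by (intro imageI) simp
    then have "?B \<noteq> {}" by (intro notI) simp
    show ?thesis
    proof (rule path_empty[OF grid_facts(1) grid_facts(2)])
      show "?B \<noteq> {}" by fact
      show "X 0 = ?A" using h by (elim conjE)
      show "X m = ?B" using h by (elim conjE)
      show "\<forall>j\<le>m. independent (?A \<union> ?B) (X j)" using h by (elim conjE)
      show "\<forall>j<m. card (symdiff (X j) (X (Suc j))) = 1" using h by (elim conjE)
    qed
  qed
qed

lemma part2:
  assumes bp: "\<beta> > 0" and fo: "f \<in> o(\<lambda>n. real n)" and ba: "beta_approx_ds \<beta> D"
    and cb: "changes_bounded f D"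
  shows False
proof -
  obtain K :: nat where K0: "1 / \<beta> < real K" using reals_Archimedean2 by blast
  then have K: "1 < real K * \<beta>" using bp by (simp add: divide_less_eq mult.commute)
  define \<epsilon> where "\<epsilon> = \<beta> / (real K + 1)"
  have ep: "\<epsilon> > 0" using bp by (simp add: \<epsilon>_def)
  have "eventually (\<lambda>x. norm (f x) \<le> \<epsilon> * norm (real x)) at_top"
    using landau_o.smallD[OF fo ep] .
  then obtain N0 where N0: "\<And>x. x \<ge> N0 \<Longrightarrow> norm (f x) \<le> \<epsilon> * norm (real x)"
    unfolding eventually_at_top_linorder by blast
  define n where "n = Suc N0"
  define m where "m = K * n"
  define A where "A = Hs m ` {1..n}"
  define B where "B = Vs n ` {1..m}"
  define as where "as = map (Hs m) [1..<Suc n]"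
  define bs where "bs = map (Vs n) [1..<Suc m]"
  define us where "us = as @ bs"
  have cr: "\<forall>a\<in>A. \<forall>b\<in>B. a \<inter> b \<noteq> {}" and dj: "A \<inter> B = {}"
    and pA: "pairwise_disj A" and pB: "pairwise_disj B"
    and rc: "\<forall>R\<in>A \<union> B. is_rect R" and cA: "card A = n" and cB: "card B = m"
    unfolding A_def B_def by (rule grid_facts)+
  have fA: "finite A" "finite B" unfolding A_def B_def by auto
  have sas: "set as = A" unfolding as_def A_def by auto
  have sbs: "set bs = B" unfolding bs_def B_def by auto
  have las: "length as = n" unfolding as_def by simp
  have lbs: "length bs = m" unfolding bs_def by simp
  have das: "distinct as" unfolding as_def using Hs_inj by (simp add: distinct_map inj_on_def inj_def)
  have dbs: "distinct bs" unfolding bs_def using Vs_inj by (simp add: distinct_map inj_on_def inj_def)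
  have dus: "distinct us" unfolding us_def using das dbs sas sbs dj by auto
  have sus: "set us = A \<union> B" unfolding us_def using sas sbs by auto
  have lus: "length us = n + m" unfolding us_def using las lbs by simp
  define I where "I t = D (take t us)" for t
  have st: "stored (take t us) = set (take t us)" for t
    using dus by (simp add: stored_distinct)
  have stsub: "set (take t us) \<subseteq> A \<union> B" for t using set_take_subset[of t us] sus by simp
  have Ast: "A \<subseteq> set (take t us)" if "n \<le> t" for t
  proof -
    have "take n us = as" unfolding us_def using las by simp
    then show ?thesis using set_take_subset_set_take[OF that, of us] sas by simp
  qed
  have rect_t: "\<forall>u\<in>set (take t us). is_rect u" for t using stsub rc by blast
  have indI: "independent (set (take t us)) (I t)"
    and cardI: "real (card (I t)) \<ge> \<beta> * real (OPT (set (take t us)))" for t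
  proof -
    have "independent (stored (take t us)) (D (take t us)) \<and>
        real (card (D (take t us))) \<ge> \<beta> * real (OPT (stored (take t us)))"
      using ba rect_t[of t] unfolding beta_approx_ds_def by blast
    then show "independent (set (take t us)) (I t)"
      "real (card (I t)) \<ge> \<beta> * real (OPT (set (take t us)))"
      unfolding I_def st by auto
  qed
  have finI: "finite (I t)" for t
    using indI[of t] stsub[of t] fA unfolding independent_def by (meson finite_UnI finite_subset)
  have IAB: "I t \<subseteq> A \<union> B" for t using indI[of t] stsub[of t] unfolding independent_def by blast
  have OPTn: "OPT (set (take t us)) \<ge> n" if "n \<le> t" for t
  proof -
    have "independent (set (take t us)) A" using Ast[OF that] pA by (simp add: independent_def)
    then show ?thesis using OPT_ge[of "set (take t us)" A] cA by simp
  qed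
  have In: "real (card (I t)) \<ge> \<beta> * real n" if "n \<le> t" for t
  proof -
    have "\<beta> * real n \<le> \<beta> * real (OPT (set (take t us)))"
      using OPTn[OF that] bp by simp
    then show ?thesis using cardI[of t] by linarith
  qed
  have P0: "I n \<subseteq> A"
  proof -
    have "take n us = as" unfolding us_def using las by simp
    then show ?thesis using indI[of n] sas unfolding independent_def by simp
  qed
  have P1: "\<not> I (n + m) \<subseteq> A"
  proof
    assume sub: "I (n + m) \<subseteq> A"
    have tk: "take (n + m) us = us" using lus by simp
    have "independent (set (take (n+m) us)) B" using tk sus pB by (simp add: independent_def)
    then have "OPT (set (take (n+m) us)) \<ge> m" using OPT_ge[of "set (take (n+m) us)" B] cB by simp
    then have "real (card (I (n+m))) \<ge> \<beta> * real m"
    proof -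
      have "\<beta> * real m \<le> \<beta> * real (OPT (set (take (n+m) us)))"
        using \<open>OPT (set (take (n+m) us)) \<ge> m\<close> bp by simp
      then show ?thesis using cardI[of "n+m"] by linarith
    qed
    moreover have "card (I (n+m)) \<le> n" using sub cA fA card_mono by metis
    moreover have "\<beta> * real m > real n"
    proof -
      have "real n < real K * \<beta> * real n" using K unfolding n_def by simp
      then show ?thesis unfolding m_def by (simp add: mult.commute mult.left_commute)
    qed
    ultimately show False by linarith
  qed
  obtain t where t: "n \<le> t" "t < n + m" "I t \<subseteq> A" "\<not> I (Suc t) \<subseteq> A"
    using switch[of "\<lambda>t. I t \<subseteq> A" n "n + m"] P0 P1 by auto
  have IB: "I (Suc t) \<subseteq> B"
    using grid_split[OF cr dj IAB[of "Suc t"]] indI[of "Suc t"] t(4)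
    unfolding independent_def by blast
  have disj: "I t \<inter> I (Suc t) = {}" using t(3) IB dj by auto
  have sd: "symdiff (I t) (I (Suc t)) = I t \<union> I (Suc t)" using disj by (auto simp: symdiff_def)
  have tS: "take (Suc t) us = take t us @ [us ! t]" using t(2) lus by (simp add: take_Suc_conv_app_nth)
  have "real (card (symdiff (D (take t us)) (D (take t us @ [us ! t]))))
      \<le> f (card (stored (take t us @ [us ! t])))"
  proof -
    have "\<forall>v\<in>set (take t us @ [us ! t]). is_rect v" using rect_t[of "Suc t"] tS by simp
    then show ?thesis using cb unfolding changes_bounded_def by blast
  qed
  moreover have "card (stored (take t us @ [us ! t])) = Suc t"
  proof -
    have "card (stored (take (Suc t) us)) = card (set (take (Suc t) us))" using st by simp
    also have "\<dots> = length (take (Suc t) us)" using dus by (intro distinct_card) simp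
    also have "\<dots> = Suc t" using t(2) lus by simp
    finally show ?thesis using tS by simp
  qed
  moreover have "card (symdiff (I t) (I (Suc t))) = card (I t) + card (I (Suc t))"
    using sd disj finI by (simp add: card_Un_disjoint)
  ultimately have c1: "real (card (I t)) + real (card (I (Suc t))) \<le> f (Suc t)"
    unfolding I_def tS by simp
  have "f (Suc t) \<le> \<epsilon> * real (Suc t)" using N0[of "Suc t"] t(1) unfolding n_def by auto
  also have "\<dots> \<le> \<epsilon> * (real K + 1) * real n"
  proof -
    have "Suc t \<le> (K + 1) * n" using t(2) unfolding m_def by simp
    then have "real (Suc t) \<le> real ((K + 1) * n)" by (simp only: of_nat_le_iff)
    then have "real (Suc t) \<le> (real K + 1) * real n" by (simp add: algebra_simps)
    then show ?thesis using ep by (simp add: mult_left_mono mult.assoc)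
  qed
  also have "\<dots> = \<beta> * real n" unfolding \<epsilon>_def by simp
  finally have "real (card (I t)) + real (card (I (Suc t))) \<le> \<beta> * real n" using c1 by linarith
  moreover have "real (card (I t)) \<ge> \<beta> * real n" "real (card (I (Suc t))) \<ge> \<beta> * real n"
    using In t(1) by auto
  moreover have "\<beta> * real n > 0" using bp unfolding n_def by simp
  ultimately show False by linarith
qed

theorem lemma1:
  shows "(\<forall>n::nat. \<exists>A B :: rect set.
            finite A \<and> finite B \<and> card A = n \<and> card B = n \<and>
            (\<forall>R\<in>A \<union> B. is_rect R) \<and> pairwise_disj A \<and> pairwise_disj B \<and>
            (\<forall>(X :: nat \<Rightarrow> rect set) m.
               X 0 = A \<and> X m = B \<and> (\<forall>j\<le>m. independent (A \<union> B) (X j)) \<and>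
               (\<forall>j<m. card (symdiff (X j) (X (Suc j))) = 1)
               \<longrightarrow> (\<exists>j\<le>m. X j = {})))
       \<and> (\<forall>\<beta>::real. \<beta> > 0 \<longrightarrow>
            \<not> (\<exists>(D :: rect list \<Rightarrow> rect set) (f :: nat \<Rightarrow> real).
                 f \<in> o(\<lambda>n. real n) \<and> beta_approx_ds \<beta> D \<and> changes_bounded f D))"
  using part1 part2 by blast

end
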